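(* If $A\subset\mathbb{X}$ is an open set with $\eta(\partial A)=0$, then $\tau(\overline A)\le\eta(A)$.
   Context: $\mathbb{X}$ is a compact metric space. $(\xi_j)_{j\in\mathbb N}$ is a sequence of finitely additive outer probabilities on $\mathbb{X}$ (set functions on all subsets, values in $[0,1]$, finitely additive, $\xi_j(\mathbb{X})=1$). For $A\subset\mathbb{X}$, $\tau(A)=\limsup_{n\to\infty}\frac1n\sum_{j=0}^{n-1}\xi_j(A)$. For $Y\subset\mathbb{X}$ and $r>0$, $\nu_r(Y)=\inf\sum_{I\in\mathcal I}\tau(I)$ over all countable covers $\mathcal I$ of $Y$ by open sets of diameter at most $r$; $\nu(Y)=\sup_{r>0}\nu_r(Y)$; $\eta$ is the restriction of $\nu$ to the Borel $\sigma$-algebra. $\partial A$ is the topological boundary and $\overline A$ the closure. *)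

theory Defs
  imports "HOL-Analysis.Analysis"
begin

definition fa_outer_prob :: "('a set \<Rightarrow> real) \<Rightarrow> bool" where
  "fa_outer_prob \<mu> \<longleftrightarrow>
     (\<forall>A. 0 \<le> \<mu> A \<and> \<mu> A \<le> 1) \<and>
     (\<forall>A B. A \<inter> B = {} \<longrightarrow> \<mu> (A \<union> B) = \<mu> A + \<mu> B) \<and>
     \<mu> UNIV = 1"

definition tau :: "(nat \<Rightarrow> 'a set \<Rightarrow> real) \<Rightarrow> 'a set \<Rightarrow> ennreal" where
  "tau \<xi> A = limsup (\<lambda>n. ennreal ((\<Sum>j<n. \<xi> j A) / real n))"

definition nu_r :: "(nat \<Rightarrow> 'a::metric_space set \<Rightarrow> real) \<Rightarrow> real \<Rightarrow> 'a set \<Rightarrow> ennreal" where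
  "nu_r \<xi> r Y = (INF \<I> \<in> {\<I>. countable \<I> \<and> (\<forall>I\<in>\<I>. open I \<and> diameter I \<le> r) \<and> Y \<subseteq> \<Union>\<I>}.
                    (\<Sum>\<^sub>\<infinity> I\<in>\<I>. tau \<xi> I))"

definition nu :: "(nat \<Rightarrow> 'a::metric_space set \<Rightarrow> real) \<Rightarrow> 'a set \<Rightarrow> ennreal" where
  "nu \<xi> Y = (SUP r \<in> {0<..}. nu_r \<xi> r Y)"

definition eta :: "(nat \<Rightarrow> 'a::metric_space set \<Rightarrow> real) \<Rightarrow> 'a set \<Rightarrow> ennreal" where
  "eta \<xi> A = (if A \<in> sets borel then nu \<xi> A else undefined)"

end

theory Submission
  imports Defs
begin

lemma limsup_e2: "limsup (u::nat\<Rightarrow>ennreal) = e2ennreal (limsup (\<lambda>n. enn2ereal (u n)))"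
proof -
  have "limsup (\<lambda>n. e2ennreal (enn2ereal (u n))) = e2ennreal (limsup (\<lambda>n. enn2ereal (u n)))"
    by (rule Limsup_compose_continuous_mono) (auto simp: continuous_on_e2ennreal mono_def e2ennreal_mono)
  then show ?thesis by simp
qed

lemma limsup_e2': "enn2ereal (limsup (u::nat\<Rightarrow>ennreal)) = limsup (\<lambda>n. enn2ereal (u n))"
proof -
  have "0 \<le> limsup (\<lambda>n. enn2ereal (u n))"
    by (rule le_Limsup) auto
  then show ?thesis by (subst limsup_e2) (simp add: enn2ereal_e2ennreal)
qed

lemma limsup_add_enn: "limsup (\<lambda>n. u n + v n :: ennreal) \<le> limsup u + limsup v"
proof -
  have "limsup (\<lambda>n. u n + v n) = e2ennreal (limsup (\<lambda>n. enn2ereal (u n) + enn2ereal (v n)))"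
    by (subst limsup_e2) (simp add: plus_ennreal.rep_eq)
  also have "\<dots> \<le> e2ennreal (limsup (\<lambda>n. enn2ereal (u n)) + limsup (\<lambda>n. enn2ereal (v n)))"
    by (intro e2ennreal_mono ereal_limsup_add_mono)
  also have "\<dots> = e2ennreal (enn2ereal (limsup u + limsup v))"
    by (simp add: limsup_e2' plus_ennreal.rep_eq)
  finally show ?thesis by simp
qed

lemma limsup_sum_enn:
  fixes f :: "'b \<Rightarrow> nat \<Rightarrow> ennreal"
  assumes "finite F"
  shows "limsup (\<lambda>n. \<Sum>I\<in>F. f I n) \<le> (\<Sum>I\<in>F. limsup (f I))"
  using assms
proof (induction F rule: finite_induct)
  case empty
  then show ?case by (simp add: Limsup_const)
next
  case (insert x F)
  have "limsup (\<lambda>n. \<Sum>I\<in>insert x F. f I n) = limsup (\<lambda>n. f x n + (\<Sum>I\<in>F. f I n))"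
    using insert by simp
  also have "\<dots> \<le> limsup (f x) + limsup (\<lambda>n. \<Sum>I\<in>F. f I n)"
    by (rule limsup_add_enn)
  also have "\<dots> \<le> limsup (f x) + (\<Sum>I\<in>F. limsup (f I))"
    using insert by (intro add_left_mono) auto
  finally show ?case using insert by simp
qed

lemma fa_nonneg: "fa_outer_prob \<mu> \<Longrightarrow> 0 \<le> \<mu> A"
  unfolding fa_outer_prob_def by blast

lemma fa_mono: assumes "fa_outer_prob \<mu>" "A \<subseteq> B" shows "\<mu> A \<le> \<mu> B"
proof -
  have "\<mu> B = \<mu> (A \<union> (B - A))" using assms(2) by (simp add: Un_Diff_cancel sup.absorb2)
  also have "\<dots> = \<mu> A + \<mu> (B - A)" using assms(1) unfolding fa_outer_prob_def by blast
  finally show ?thesis using fa_nonneg[OF assms(1), of "B - A"] by simp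
qed

lemma fa_union: assumes "fa_outer_prob \<mu>" shows "\<mu> (A \<union> B) \<le> \<mu> A + \<mu> B"
proof -
  have "\<mu> (A \<union> B) = \<mu> (A \<union> (B - A))" by (simp add: Un_Diff_cancel)
  also have "\<dots> = \<mu> A + \<mu> (B - A)" using assms(1) unfolding fa_outer_prob_def by blast
  also have "\<dots> \<le> \<mu> A + \<mu> B" using fa_mono[OF assms, of "B - A" B] by simp
  finally show ?thesis .
qed

lemma fa_Union: assumes "fa_outer_prob \<mu>" "finite F" shows "\<mu> (\<Union>F) \<le> (\<Sum>I\<in>F. \<mu> I)"
  using assms(2)
proof (induction F rule: finite_induct)
  case empty
  have "\<mu> ({} \<union> {}) = \<mu> {} + \<mu> {}" using assms(1) unfolding fa_outer_prob_def by blast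
  then show ?case by simp
next
  case (insert x F)
  have "\<mu> (\<Union>(insert x F)) \<le> \<mu> x + \<mu> (\<Union>F)" using fa_union[OF assms(1)] by simp
  then show ?case using insert by simp
qed

lemma tau_mono:
  assumes "\<And>j. fa_outer_prob (\<xi> j)" "A \<subseteq> B"
  shows "tau \<xi> A \<le> tau \<xi> B"
  unfolding tau_def
proof (rule Limsup_mono, rule always_eventually, intro allI)
  fix n
  have "(\<Sum>j<n. \<xi> j A) \<le> (\<Sum>j<n. \<xi> j B)"
    by (intro sum_mono fa_mono assms)
  then show "ennreal ((\<Sum>j<n. \<xi> j A) / real n) \<le> ennreal ((\<Sum>j<n. \<xi> j B) / real n)"
    by (intro ennreal_leI divide_right_mono) auto
qed

lemma tau_Union:
  assumes "\<And>j. fa_outer_prob (\<xi> j)" "finite F"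
  shows "tau \<xi> (\<Union>F) \<le> (\<Sum>I\<in>F. tau \<xi> I)"
proof -
  have "tau \<xi> (\<Union>F) \<le> limsup (\<lambda>n. \<Sum>I\<in>F. ennreal ((\<Sum>j<n. \<xi> j I) / real n))"
    unfolding tau_def
  proof (rule Limsup_mono, rule always_eventually, intro allI)
    fix n
    have "(\<Sum>j<n. \<xi> j (\<Union>F)) \<le> (\<Sum>j<n. \<Sum>I\<in>F. \<xi> j I)"
      by (intro sum_mono fa_Union assms)
    also have "\<dots> = (\<Sum>I\<in>F. \<Sum>j<n. \<xi> j I)" by (rule sum.swap)
    finally have "(\<Sum>j<n. \<xi> j (\<Union>F)) / real n \<le> (\<Sum>I\<in>F. (\<Sum>j<n. \<xi> j I) / real n)"
      by (simp add: sum_divide_distrib[symmetric] divide_right_mono)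
    moreover have nn: "\<And>I. 0 \<le> (\<Sum>j<n. \<xi> j I) / real n"
      by (intro divide_nonneg_nonneg sum_nonneg fa_nonneg[OF assms(1)]) auto
    ultimately show "ennreal ((\<Sum>j<n. \<xi> j (\<Union>F)) / real n) \<le> (\<Sum>I\<in>F. ennreal ((\<Sum>j<n. \<xi> j I) / real n))"
      by (simp add: nn ennreal_leI)
  qed
  also have "\<dots> \<le> (\<Sum>I\<in>F. tau \<xi> I)"
    unfolding tau_def by (rule limsup_sum_enn[OF assms(2)])
  finally show ?thesis .
qed

lemma sum_le_infsum_enn:
  fixes f :: "'b \<Rightarrow> ennreal"
  assumes "finite G" "G \<subseteq> S"
  shows "sum f G \<le> infsum f S"
  using assms by (subst nonneg_infsum_complete) (auto intro!: SUP_upper)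

lemma good_cover:
  fixes \<xi> :: "nat \<Rightarrow> 'a::metric_space set \<Rightarrow> real"
  assumes "nu \<xi> Y < c"
  obtains \<I> where "countable \<I>" "\<forall>I\<in>\<I>. open I" "Y \<subseteq> \<Union>\<I>" "(\<Sum>\<^sub>\<infinity> I\<in>\<I>. tau \<xi> I) < c"
proof -
  have "nu_r \<xi> 1 Y \<le> nu \<xi> Y" unfolding nu_def by (rule SUP_upper) auto
  then have "nu_r \<xi> 1 Y < c" using assms by simp
  then show ?thesis unfolding nu_r_def INF_less_iff using that by blast
qed

theorem mainTheorem12:
  fixes \<xi> :: "nat \<Rightarrow> 'a::metric_space set \<Rightarrow> real" and A :: "'a set"
  assumes "compact (UNIV :: 'a set)"
    and "\<And>j. fa_outer_prob (\<xi> j)"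
    and "open A"
    and "eta \<xi> (frontier A) = 0"
  shows "tau \<xi> (closure A) \<le> eta \<xi> A"
proof -
  have etaA: "eta \<xi> A = nu \<xi> A" using assms(3) unfolding eta_def by auto
  have etaF: "nu \<xi> (frontier A) = 0" using assms(4) unfolding eta_def by auto
  have cc: "compact (closure A)"
    using closed_Int_compact[OF closed_closure assms(1)] by simp
  show ?thesis unfolding etaA
  proof (rule ennreal_le_epsilon)
    fix e :: real assume fin: "nu \<xi> A < top" and e: "0 < e"
    have e2: "0 < ennreal (e/2)" using e by simp
    have "nu \<xi> A < nu \<xi> A + ennreal (e/2)"
      using ennreal_add_left_cancel_less[of "nu \<xi> A" 0 "ennreal (e/2)"] fin e2 by simp
    then obtain \<I> where I: "countable \<I>" "\<forall>I\<in>\<I>. open I" "A \<subseteq> \<Union>\<I>"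
        "(\<Sum>\<^sub>\<infinity> I\<in>\<I>. tau \<xi> I) < nu \<xi> A + ennreal (e/2)"
      by (rule good_cover)
    have "nu \<xi> (frontier A) < ennreal (e/2)" using etaF e2 by simp
    then obtain \<J> where J: "countable \<J>" "\<forall>I\<in>\<J>. open I" "frontier A \<subseteq> \<Union>\<J>"
        "(\<Sum>\<^sub>\<infinity> I\<in>\<J>. tau \<xi> I) < ennreal (e/2)"
      by (rule good_cover)
    have cov: "closure A \<subseteq> \<Union>(\<I> \<union> \<J>)" using I(3) J(3) closure_Un_frontier[of A] by auto
    have op: "\<And>B. B \<in> \<I> \<union> \<J> \<Longrightarrow> open B" using I(2) J(2) by blast
    obtain G where G: "G \<subseteq> \<I> \<union> \<J>" "finite G" "closure A \<subseteq> \<Union>G"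
      by (rule compactE[OF cc cov op])
    have "tau \<xi> (closure A) \<le> tau \<xi> (\<Union>G)" by (rule tau_mono[OF assms(2) G(3)])
    also have "\<dots> \<le> (\<Sum>I\<in>G. tau \<xi> I)" by (rule tau_Union[OF assms(2) G(2)])
    also have "\<dots> \<le> (\<Sum>I\<in>G \<inter> \<I>. tau \<xi> I) + (\<Sum>I\<in>G \<inter> \<J>. tau \<xi> I)"
    proof -
      have "G = (G \<inter> \<I>) \<union> (G \<inter> \<J>)" using G(1) by blast
      then have "(\<Sum>I\<in>G. tau \<xi> I) = (\<Sum>I\<in>(G \<inter> \<I>) \<union> (G \<inter> \<J>). tau \<xi> I)" by simp
      also have "\<dots> \<le> (\<Sum>I\<in>(G \<inter> \<I>) \<union> (G \<inter> \<J>). tau \<xi> I) + (\<Sum>I\<in>(G \<inter> \<I>) \<inter> (G \<inter> \<J>). tau \<xi> I)"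
        by simp
      also have "\<dots> = (\<Sum>I\<in>G \<inter> \<I>. tau \<xi> I) + (\<Sum>I\<in>G \<inter> \<J>. tau \<xi> I)"
        by (rule sum.union_inter) (use G(2) in auto)
      finally show ?thesis .
    qed
    also have "\<dots> \<le> (\<Sum>\<^sub>\<infinity> I\<in>\<I>. tau \<xi> I) + (\<Sum>\<^sub>\<infinity> I\<in>\<J>. tau \<xi> I)"
      by (intro add_mono sum_le_infsum_enn) (use G(2) in auto)
    also have "\<dots> \<le> (nu \<xi> A + ennreal (e/2)) + ennreal (e/2)"
      using I(4) J(4) by (intro add_mono) auto
    also have "\<dots> = nu \<xi> A + ennreal e"
    proof -
      have "ennreal (e/2) + ennreal (e/2) = ennreal (e/2 + e/2)"
        using e by (intro ennreal_plus[symmetric]) auto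
      then show ?thesis by (simp add: add.assoc)
    qed
    finally show "tau \<xi> (closure A) \<le> nu \<xi> A + ennreal e" .
  qed
qed

end
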